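(* Let $\vec a\in\mathbb R^4\setminus\{0\}$, let $V\in\mathfrak X(\mathbb H^3)$ be the proper conformal vector field $V(p)=\vec a+\langle\vec a,p\rangle p$, let $q\neq0$, and let $\gamma\colon I\to\mathbb H^3$ be a curve parametrized by arc-length which is a conformal trajectory of $V$. Then there exist $a_1,a_2\in\mathbb R$ such that $$\langle\gamma(s),\vec a\rangle=a_1\cosh s+a_2\sinh s\quad\text{for all }s\in I.$$ If $\gamma$ is a geodesic, then $\gamma(s)=\cosh(s)\,\vec v+\sinh(s)\,\vec w$ with $\langle\vec v,\vec v\rangle=-1$, $\langle\vec w,\vec w\rangle=1$, $\langle\vec v,\vec w\rangle=0$ and $\vec a\in\operatorname{span}\{\vec v,\vec w\}$; that is, $\gamma$ is obtained by intersecting $\mathbb H^3$ with a Lorentzian (Minkowski) $2$-plane through the origin containing $\vec a$. If $\gamma$ is not a geodesic, then its curvature is constant with $\kappa^2=q^2\big(\langle\vec a,\vec a\rangle+a_1^2-a_2^2\big)$, and its torsion is $\tau(s)=q\,(a_1\sinh s+a_2\cosh s)$.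
   Context: $\mathbb R^4$ carries the Lorentzian metric $\langle\cdot,\cdot\rangle=dx^2+dy^2+dz^2-dt^2$ and $\mathbb H^3=\{p\in\mathbb R^4:\langle p,p\rangle=-1,\ t>0\}$ with the induced Riemannian metric; its Levi-Civita connection satisfies $\nabla_{\gamma'}\gamma'=\gamma''-\gamma$ for unit-speed curves. The cross product of $u,v\in T_p\mathbb H^3$ is the unique $u\times v\in T_p\mathbb H^3$ with $\langle u\times v,w\rangle=\det(u,v,w,p)$ for all $w\in T_p\mathbb H^3$. For a fixed real $q\neq0$, a conformal trajectory of $V$ is a regular curve with $\nabla_{\gamma'}\gamma'=q\,V\times\gamma'$. Frenet frame of a non-geodesic unit-speed curve: $T=\gamma'$, $\nabla_TT=\kappa N$ with $\kappa>0$, $B=T\times N$, $\nabla_TN=-\kappa T+\tau B$, $\nabla_TB=-\tau N$; $\kappa$ is the curvature, $\tau$ the torsion. *)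

theory Defs
  imports "HOL-Analysis.Analysis"
begin

definition lor :: "real^4 \<Rightarrow> real^4 \<Rightarrow> real" where
  "lor u v = u$1 * v$1 + u$2 * v$2 + u$3 * v$3 - u$4 * v$4"

definition H3 :: "(real^4) set" where
  "H3 = {p. lor p p = -1 \<and> p$4 > 0}"

definition tangent_space :: "real^4 \<Rightarrow> (real^4) set" where
  "tangent_space p = {w. lor w p = 0}"

definition det4 :: "real^4 \<Rightarrow> real^4 \<Rightarrow> real^4 \<Rightarrow> real^4 \<Rightarrow> real" where
  "det4 u v w p = det (\<chi> i. if i = 1 then u else if i = 2 then v else if i = 3 then w else p)"

definition hcross :: "real^4 \<Rightarrow> real^4 \<Rightarrow> real^4 \<Rightarrow> real^4" where
  "hcross p u v = (THE c. c \<in> tangent_space p \<and>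
      (\<forall>w \<in> tangent_space p. lor c w = det4 u v w p))"

definition confV :: "real^4 \<Rightarrow> real^4 \<Rightarrow> real^4" where
  "confV a p = a + lor a p *\<^sub>R p"

text \<open>Levi-Civita covariant derivative along a curve gamma in H^3 of a vector field X along gamma:
  tangential projection of the ambient derivative X'(s).\<close>
definition covD :: "(real \<Rightarrow> real^4) \<Rightarrow> (real \<Rightarrow> real^4) \<Rightarrow> real \<Rightarrow> real^4" where
  "covD \<gamma> X s = vector_derivative X (at s) + lor (vector_derivative X (at s)) (\<gamma> s) *\<^sub>R \<gamma> s"

end

theory Submission imports Defs begin

lemma det_4: "det (A::real^4^4) =
  A$1$1 * (A$2$2*(A$3$3*A$4$4 - A$3$4*A$4$3) - A$2$3*(A$3$2*A$4$4 - A$3$4*A$4$2) + A$2$4*(A$3$2*A$4$3 - A$3$3*A$4$2))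
 - A$1$2 * (A$2$1*(A$3$3*A$4$4 - A$3$4*A$4$3) - A$2$3*(A$3$1*A$4$4 - A$3$4*A$4$1) + A$2$4*(A$3$1*A$4$3 - A$3$3*A$4$1))
 + A$1$3 * (A$2$1*(A$3$2*A$4$4 - A$3$4*A$4$2) - A$2$2*(A$3$1*A$4$4 - A$3$4*A$4$1) + A$2$4*(A$3$1*A$4$2 - A$3$2*A$4$1))
 - A$1$4 * (A$2$1*(A$3$2*A$4$3 - A$3$3*A$4$2) - A$2$2*(A$3$1*A$4$3 - A$3$3*A$4$1) + A$2$3*(A$3$1*A$4$2 - A$3$2*A$4$1))"
proof -
  have f1: "finite {2::4, 3, 4}" "1 \<notin> {2::4, 3, 4}" by auto
  have f2: "finite {3::4, 4}" "2 \<notin> {3::4, 4}" by auto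
  have f3: "finite {4::4}" "3 \<notin> {4::4}" by auto
  show ?thesis
    unfolding det_def UNIV_4
    unfolding sum_over_permutations_insert[OF f1]
    unfolding sum_over_permutations_insert[OF f2]
    unfolding sum_over_permutations_insert[OF f3]
    unfolding permutes_sing
    by (simp add: sign_swap_id permutation_swap_id permutation_compose sign_compose sign_id swap_id_eq transpose_def algebra_simps)
qed


definition d3 :: "real^4 \<Rightarrow> real^4 \<Rightarrow> real^4 \<Rightarrow> 4 \<Rightarrow> 4 \<Rightarrow> 4 \<Rightarrow> real" where
  "d3 x y z i j k = x$i*(y$j*z$k - y$k*z$j) - x$j*(y$i*z$k - y$k*z$i) + x$k*(y$i*z$j - y$j*z$i)"

definition cr :: "real^4 \<Rightarrow> real^4 \<Rightarrow> real^4 \<Rightarrow> real^4" where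
  "cr p u v = (\<chi> i. if i = 1 then d3 u v p 2 3 4 else if i = 2 then - d3 u v p 1 3 4
     else if i = 3 then d3 u v p 1 2 4 else d3 u v p 1 2 3)"

lemma cr_comp: "cr p u v $ 1 = d3 u v p 2 3 4" "cr p u v $ 2 = - d3 u v p 1 3 4"
   "cr p u v $ 3 = d3 u v p 1 2 4" "cr p u v $ 4 = d3 u v p 1 2 3"
  by (simp_all add: cr_def)

lemma det4_exp: "det4 u v w p =
  u$1 * (v$2*(w$3*p$4 - w$4*p$3) - v$3*(w$2*p$4 - w$4*p$2) + v$4*(w$2*p$3 - w$3*p$2))
 - u$2 * (v$1*(w$3*p$4 - w$4*p$3) - v$3*(w$1*p$4 - w$4*p$1) + v$4*(w$1*p$3 - w$3*p$1))
 + u$3 * (v$1*(w$2*p$4 - w$4*p$2) - v$2*(w$1*p$4 - w$4*p$1) + v$4*(w$1*p$2 - w$2*p$1))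
 - u$4 * (v$1*(w$2*p$3 - w$3*p$2) - v$2*(w$1*p$3 - w$3*p$1) + v$3*(w$1*p$2 - w$2*p$1))"
  unfolding det4_def det_4 by simp

lemma cr_lor: "lor (cr p u v) w = det4 u v w p"
  unfolding det4_exp lor_def cr_comp d3_def by algebra

lemma cr_lor_p: "lor (cr p u v) p = 0"
  unfolding lor_def cr_comp d3_def by algebra
lemma cr_lor_u: "lor (cr p u v) u = 0"
  unfolding lor_def cr_comp d3_def by algebra
lemma cr_lor_v: "lor (cr p u v) v = 0"
  unfolding lor_def cr_comp d3_def by algebra

lemma cr_same2: "cr p u p = 0"
  by (simp add: vec_eq_iff forall_4 cr_comp d3_def, (algebra)?)
lemma cr_same1: "cr p p v = 0"
  by (simp add: vec_eq_iff forall_4 cr_comp d3_def, (algebra)?)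
lemma cr_same12: "cr p u u = 0"
  by (simp add: vec_eq_iff forall_4 cr_comp d3_def, (algebra)?)

lemma cr_add1: "cr p (u + u') v = cr p u v + cr p u' v"
  by (simp add: vec_eq_iff forall_4 cr_comp d3_def, (algebra)?)
lemma cr_scale1: "cr p (c *\<^sub>R u) v = c *\<^sub>R cr p u v"
  by (simp add: vec_eq_iff forall_4 cr_comp d3_def, (algebra)?)
lemma cr_add2: "cr p u (v + v') = cr p u v + cr p u v'"
  by (simp add: vec_eq_iff forall_4 cr_comp d3_def, (algebra)?)
lemma cr_scale2: "cr p u (c *\<^sub>R v) = c *\<^sub>R cr p u v"
  by (simp add: vec_eq_iff forall_4 cr_comp d3_def, (algebra)?)
lemma cr_add0: "cr (p + p') u v = cr p u v + cr p' u v"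
  by (simp add: vec_eq_iff forall_4 cr_comp d3_def, (algebra)?)
lemma cr_scale0: "cr (c *\<^sub>R p) u v = c *\<^sub>R cr p u v"
  by (simp add: vec_eq_iff forall_4 cr_comp d3_def, (algebra)?)

lemma cr_bac: "cr p u (cr p v w) =
   (- (lor p p * lor u w - lor u p * lor w p)) *\<^sub>R v + (lor p p * lor u v - lor u p * lor v p) *\<^sub>R w
   + (lor u w * lor v p - lor u v * lor w p) *\<^sub>R p"
  by (simp add: vec_eq_iff forall_4 cr_comp d3_def lor_def, (algebra)?)

lemma cr_norm: "lor (cr p u v) (cr p u v) = - lor p p * (lor u u * lor v v - (lor u v)^2)
   + lor u u * (lor v p)^2 + lor v v * (lor u p)^2 - 2 * lor u v * lor u p * lor v p"
  unfolding cr_comp d3_def lor_def by algebra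


lemma lor_sym: "lor u v = lor v u" by (simp add: lor_def algebra_simps)
lemma lor_add1: "lor (u + u') v = lor u v + lor u' v" by (simp add: lor_def algebra_simps)
lemma lor_add2: "lor u (v + v') = lor u v + lor u v'" by (simp add: lor_def algebra_simps)
lemma lor_diff1: "lor (u - u') v = lor u v - lor u' v" by (simp add: lor_def algebra_simps)
lemma lor_diff2: "lor u (v - v') = lor u v - lor u v'" by (simp add: lor_def algebra_simps)
lemma lor_scale1: "lor (c *\<^sub>R u) v = c * lor u v" by (simp add: lor_def algebra_simps)
lemma lor_scale2: "lor u (c *\<^sub>R v) = c * lor u v" by (simp add: lor_def algebra_simps)
lemma lor_minus1: "lor (- u) v = - lor u v" by (simp add: lor_def algebra_simps)
lemma lor_minus2: "lor u (- v) = - lor u v" by (simp add: lor_def algebra_simps)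
lemma lor_zero1: "lor 0 v = 0" by (simp add: lor_def)
lemma lor_zero2: "lor u 0 = 0" by (simp add: lor_def)
lemmas lor_simps = lor_add1 lor_add2 lor_diff1 lor_diff2 lor_scale1 lor_scale2 lor_minus1 lor_minus2 lor_zero1 lor_zero2

lemma bb_lor: "bounded_bilinear lor"
  unfolding bilinear_conv_bounded_bilinear[symmetric] bilinear_def
  by (auto intro!: linearI simp: lor_simps)

lemma bb_cr: "bounded_bilinear (\<lambda>p u. cr p a u)"
  unfolding bilinear_conv_bounded_bilinear[symmetric] bilinear_def
  by (auto intro!: linearI simp: cr_add0 cr_scale0 cr_add2 cr_scale2)

lemma lor_deriv:
  assumes "(f has_vector_derivative f') (at s)" "(g has_vector_derivative g') (at s)"
  shows "((\<lambda>s. lor (f s) (g s)) has_real_derivative (lor f' (g s) + lor (f s) g')) (at s)"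
  using bounded_bilinear.has_vector_derivative[OF bb_lor assms]
  unfolding has_real_derivative_iff_has_vector_derivative by (simp add: add.commute)

lemma cr_deriv:
  assumes "(f has_vector_derivative f') (at s)" "(g has_vector_derivative g') (at s)"
  shows "((\<lambda>s. cr (f s) a (g s)) has_vector_derivative (cr (f s) a g' + cr f' a (g s))) (at s)"
  using bounded_bilinear.has_vector_derivative[OF bb_cr assms] by simp

lemma sq3: "(x1*y1+x2*y2+x3*y3)^2 \<le> (x1^2+x2^2+x3^2)*(y1^2+y2^2+y3^2)" for x1 x2 x3 y1 y2 y3 :: real
proof -
  have "(x1^2+x2^2+x3^2)*(y1^2+y2^2+y3^2) - (x1*y1+x2*y2+x3*y3)^2
    = (x1*y2-x2*y1)^2 + (x1*y3-x3*y1)^2 + (x2*y3-x3*y2)^2" by algebra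
  moreover have "(x1*y2-x2*y1)^2 + (x1*y3-x3*y1)^2 + (x2*y3-x3*y2)^2 \<ge> 0" by simp
  ultimately show ?thesis by linarith
qed

lemma tangent_nonneg:
  assumes "p \<in> H3" "lor w p = 0"
  shows "lor w w \<ge> 0" "lor w w = 0 \<Longrightarrow> w = 0"
proof -
  define P where "P = p$1^2+p$2^2+p$3^2"
  define W where "W = w$1^2+w$2^2+w$3^2"
  have P0: "P \<ge> 0" "W \<ge> 0" unfolding P_def W_def by simp_all
  have hp: "p$4^2 = 1 + P" "p$4 > 0" using assms(1) unfolding H3_def lor_def P_def by (auto simp: power2_eq_square)
  have hw: "w$4 * p$4 = w$1*p$1+w$2*p$2+w$3*p$3" using assms(2) unfolding lor_def by simp
  have cs: "(w$4 * p$4)^2 \<le> W * P" unfolding hw W_def P_def by (rule sq3)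
  hence cs2: "w$4^2 + w$4^2 * P \<le> W * P" using hp by (simp add: power_mult_distrib algebra_simps)
  have ww: "lor w w = W - w$4^2" unfolding lor_def W_def by (simp add: power2_eq_square)
  show "lor w w \<ge> 0"
  proof (rule ccontr)
    assume "\<not> ?thesis"
    hence "W < w$4^2" using ww by simp
    hence "W * P \<le> w$4^2 * P" using P0 by (simp add: mult_right_mono)
    with cs2 have "w$4^2 \<le> 0" by linarith
    hence "w$4 = 0" by simp
    with \<open>W < w$4^2\<close> P0 show False by simp
  qed
  assume "lor w w = 0"
  hence "W = w$4^2" using ww by simp
  with cs2 have "w$4^2 \<le> 0" by (simp add: algebra_simps)
  hence "w$4 = 0" by simp
  with \<open>W = w$4^2\<close> have "W = 0" by simp
  hence "w$1 = 0" "w$2 = 0" "w$3 = 0" unfolding W_def by (simp_all add: add_nonneg_eq_0_iff)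
  with \<open>w$4 = 0\<close> show "w = 0" by (simp add: vec_eq_iff forall_4)
qed

lemma hcross_eq:
  assumes "p \<in> H3"
  shows "hcross p u v = cr p u v"
  unfolding hcross_def
proof (rule the_equality)
  show "cr p u v \<in> tangent_space p \<and> (\<forall>w\<in>tangent_space p. lor (cr p u v) w = det4 u v w p)"
    by (simp add: tangent_space_def cr_lor_p cr_lor)
  fix c assume c: "c \<in> tangent_space p \<and> (\<forall>w\<in>tangent_space p. lor c w = det4 u v w p)"
  define d where "d = c - cr p u v"
  have dt: "lor d p = 0" using c unfolding d_def tangent_space_def by (simp add: lor_simps cr_lor_p)
  hence "d \<in> tangent_space p" unfolding tangent_space_def by simp
  hence "lor c d = det4 u v d p" using c by blast
  hence "lor d d = 0" unfolding d_def[symmetric] by (simp add: d_def lor_diff1 cr_lor)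
  hence "d = 0" using tangent_nonneg(2)[OF assms dt] by simp
  thus "c = cr p u v" unfolding d_def by simp
qed

lemma deriv_const_zero:
  assumes "open I" "s \<in> I" "\<And>x. x \<in> I \<Longrightarrow> f x = c" "(f has_real_derivative D) (at s)"
  shows "D = 0"
proof -
  have "((\<lambda>x. c) has_real_derivative 0) (at s)" by simp
  hence "(f has_real_derivative 0) (at s)"
    by (rule has_field_derivative_transform_within_open[OF _ assms(1,2)]) (simp add: assms(3))
  thus ?thesis using assms(4) DERIV_unique by blast
qed


lemma dsinh: "(sinh has_real_derivative cosh s) (at s)"
  by (auto intro!: derivative_eq_intros)
lemma dcosh: "(cosh has_real_derivative sinh s) (at s)"
  by (auto intro!: derivative_eq_intros)

lemma ode_scalar:
  fixes f g :: "real \<Rightarrow> real"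
  assumes I: "is_interval I" "I \<noteq> {}"
   and df: "\<And>s. s \<in> I \<Longrightarrow> (f has_real_derivative g s) (at s)"
   and dg: "\<And>s. s \<in> I \<Longrightarrow> (g has_real_derivative f s) (at s)"
  shows "\<exists>a1 a2. \<forall>s\<in>I. f s = a1 * cosh s + a2 * sinh s \<and> g s = a1 * sinh s + a2 * cosh s"
proof -
  have cv: "convex I" using I(1) by (simp add: is_interval_convex)
  have "\<exists>c. \<forall>s\<in>I. f s * cosh s - g s * sinh s = c"
  proof (rule has_field_derivative_zero_constant[OF cv])
    fix s assume s: "s \<in> I"
    have "((\<lambda>s. f s * cosh s - g s * sinh s) has_real_derivative
       (g s * cosh s + f s * sinh s) - (f s * sinh s + g s * cosh s)) (at s)"
      by (auto intro!: derivative_eq_intros df[OF s] dg[OF s])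
    thus "((\<lambda>s. f s * cosh s - g s * sinh s) has_real_derivative 0) (at s within I)"
      by (simp add: has_field_derivative_at_within)
  qed
  then obtain a1 where a1: "\<forall>s\<in>I. f s * cosh s - g s * sinh s = a1" by blast
  have "\<exists>c. \<forall>s\<in>I. g s * cosh s - f s * sinh s = c"
  proof (rule has_field_derivative_zero_constant[OF cv])
    fix s assume s: "s \<in> I"
    have "((\<lambda>s. g s * cosh s - f s * sinh s) has_real_derivative
       (f s * cosh s + g s * sinh s) - (g s * sinh s + f s * cosh s)) (at s)"
      by (auto intro!: derivative_eq_intros df[OF s] dg[OF s])
    thus "((\<lambda>s. g s * cosh s - f s * sinh s) has_real_derivative 0) (at s within I)"
      by (simp add: has_field_derivative_at_within)
  qed
  then obtain a2 where a2: "\<forall>s\<in>I. g s * cosh s - f s * sinh s = a2" by blast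
  show ?thesis
  proof (intro exI ballI)
    fix s assume s: "s \<in> I"
    have c: "cosh s ^ 2 = sinh s ^ 2 + 1" by (rule cosh_square_eq)
    have e1: "a1 = f s * cosh s - g s * sinh s" and e2: "a2 = g s * cosh s - f s * sinh s"
      using a1 a2 s by auto
    have "a1 * cosh s + a2 * sinh s = f s * (cosh s ^2 - sinh s ^2)"
      unfolding e1 e2 by (simp add: algebra_simps power2_eq_square)
    moreover have "a1 * sinh s + a2 * cosh s = g s * (cosh s ^2 - sinh s ^2)"
      unfolding e1 e2 by (simp add: algebra_simps power2_eq_square)
    ultimately show "f s = a1 * cosh s + a2 * sinh s \<and> g s = a1 * sinh s + a2 * cosh s"
      using c by simp
  qed
qed


theorem theorem3:
  fixes a :: "real^4" and q :: real and I :: "real set" and \<gamma> \<gamma>' :: "real \<Rightarrow> real^4"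
  assumes a_nz: "a \<noteq> 0"
    and q_nz: "q \<noteq> 0"
    and I_open: "open I" and I_interval: "is_interval I" and I_ne: "I \<noteq> {}"
    and in_H3: "\<And>s. s \<in> I \<Longrightarrow> \<gamma> s \<in> H3"
    and deriv: "\<And>s. s \<in> I \<Longrightarrow> (\<gamma> has_vector_derivative \<gamma>' s) (at s)"
    and deriv2: "\<And>s. s \<in> I \<Longrightarrow> \<gamma>' differentiable (at s)"
    and unit_speed: "\<And>s. s \<in> I \<Longrightarrow> lor (\<gamma>' s) (\<gamma>' s) = 1"
    and traj: "\<And>s. s \<in> I \<Longrightarrow> covD \<gamma> \<gamma>' s = q *\<^sub>R hcross (\<gamma> s) (confV a (\<gamma> s)) (\<gamma>' s)"
  shows "\<exists>a1 a2 :: real.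
     (\<forall>s \<in> I. lor (\<gamma> s) a = a1 * cosh s + a2 * sinh s)
   \<and> ((\<forall>s \<in> I. covD \<gamma> \<gamma>' s = 0) \<longrightarrow>
        (\<exists>v w. lor v v = -1 \<and> lor w w = 1 \<and> lor v w = 0 \<and> a \<in> span {v, w} \<and>
           (\<forall>s \<in> I. \<gamma> s = cosh s *\<^sub>R v + sinh s *\<^sub>R w)))
   \<and> (\<not> (\<forall>s \<in> I. covD \<gamma> \<gamma>' s = 0) \<longrightarrow>
        (let \<kappa> = (\<lambda>s. sqrt (lor (covD \<gamma> \<gamma>' s) (covD \<gamma> \<gamma>' s)));
             N = (\<lambda>s. (1 / \<kappa> s) *\<^sub>R covD \<gamma> \<gamma>' s);
             B = (\<lambda>s. hcross (\<gamma> s) (\<gamma>' s) (N s));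
             \<tau> = (\<lambda>s. q * (a1 * sinh s + a2 * cosh s))
         in (\<forall>s \<in> I. \<kappa> s > 0 \<and> (\<kappa> s)\<^sup>2 = q\<^sup>2 * (lor a a + a1\<^sup>2 - a2\<^sup>2))
          \<and> (\<forall>s \<in> I. N differentiable (at s) \<and>
                covD \<gamma> N s = - \<kappa> s *\<^sub>R \<gamma>' s + \<tau> s *\<^sub>R B s)))"
proof -
  define T' where "T' s = vector_derivative \<gamma>' (at s)" for s
  have dT: "(\<gamma>' has_vector_derivative T' s) (at s)" if "s \<in> I" for s
    unfolding T'_def using deriv2[OF that] vector_derivative_works by blast
  have pp: "lor (\<gamma> s) (\<gamma> s) = -1" if "s \<in> I" for s
    using in_H3[OF that] unfolding H3_def by simp
  have pT: "lor (\<gamma> s) (\<gamma>' s) = 0" if s: "s \<in> I" for s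
  proof -
    have "lor (\<gamma>' s) (\<gamma> s) + lor (\<gamma> s) (\<gamma>' s) = 0"
      by (rule deriv_const_zero[OF I_open s pp lor_deriv[OF deriv[OF s] deriv[OF s]]])
    thus ?thesis by (simp add: lor_sym)
  qed
  have Tp: "lor (\<gamma>' s) (\<gamma> s) = 0" if s: "s \<in> I" for s using pT[OF s] by (simp add: lor_sym)
  have pT': "lor (T' s) (\<gamma> s) = -1" if s: "s \<in> I" for s
  proof -
    have "lor (T' s) (\<gamma> s) + lor (\<gamma>' s) (\<gamma>' s) = 0"
      by (rule deriv_const_zero[OF I_open s Tp lor_deriv[OF dT[OF s] deriv[OF s]]])
    thus ?thesis using unit_speed[OF s] by simp
  qed
  define X where "X s = cr (\<gamma> s) a (\<gamma>' s)" for s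
  define f where "f s = lor (\<gamma> s) a" for s
  define g where "g s = lor (\<gamma>' s) a" for s
  have covX: "covD \<gamma> \<gamma>' s = q *\<^sub>R X s" if s: "s \<in> I" for s
    using traj[OF s] unfolding hcross_eq[OF in_H3[OF s]] confV_def X_def
    by (simp add: cr_add1 cr_scale1 cr_same1)
  have covT: "covD \<gamma> \<gamma>' s = T' s - \<gamma> s" if s: "s \<in> I" for s
    unfolding covD_def T'_def[symmetric] using pT'[OF s] by simp
  have TX: "T' s = \<gamma> s + q *\<^sub>R X s" if s: "s \<in> I" for s
    using covX[OF s] covT[OF s] by (simp add: algebra_simps)
  have Xa: "lor (X s) a = 0" for s unfolding X_def by (rule cr_lor_u)
  have Xp: "lor (X s) (\<gamma> s) = 0" for s unfolding X_def by (rule cr_lor_p)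
  have df: "(f has_real_derivative g s) (at s)" if s: "s \<in> I" for s
    using lor_deriv[OF deriv[OF s], of "\<lambda>_. a" 0] unfolding f_def g_def by (simp add: lor_zero2)
  have dg: "(g has_real_derivative f s) (at s)" if s: "s \<in> I" for s
    using lor_deriv[OF dT[OF s], of "\<lambda>_. a" 0] unfolding f_def g_def
    by (simp add: lor_zero2 TX[OF s] lor_simps Xa)
  obtain a1 a2 where fg: "\<And>s. s\<in>I \<Longrightarrow> f s = a1 * cosh s + a2 * sinh s \<and> g s = a1 * sinh s + a2 * cosh s"
    using ode_scalar[OF I_interval I_ne df dg] by blast
  have XX: "lor (X s) (X s) = lor a a + f s ^ 2 - g s ^ 2" if s: "s \<in> I" for s
  proof -
    have "lor a (\<gamma> s) = f s" "lor a (\<gamma>' s) = g s" unfolding f_def g_def by (simp_all add: lor_sym)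
    thus ?thesis
      unfolding X_def cr_norm using pp[OF s] unit_speed[OF s] Tp[OF s]
      by (simp add: power2_eq_square)
  qed
  have XXC: "lor (X s) (X s) = lor a a + a1 ^ 2 - a2 ^ 2" if s: "s \<in> I" for s
  proof -
    have c: "cosh s ^ 2 = sinh s ^ 2 + 1" by (rule cosh_square_eq)
    have "lor a a + f s ^ 2 - g s ^ 2 = lor a a + (a1^2 - a2^2) * (cosh s ^ 2 - sinh s ^ 2)"
      using fg[OF s] by (simp add: algebra_simps power2_eq_square)
    thus ?thesis using XX[OF s] c by simp
  qed
  have Xnn: "lor (X s) (X s) \<ge> 0" if s: "s \<in> I" for s
    using tangent_nonneg(1)[OF in_H3[OF s] Xp] .
  show ?thesis
  proof (rule exI[of _ a1], rule exI[of _ a2], intro conjI impI)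
    show "\<forall>s\<in>I. lor (\<gamma> s) a = a1 * cosh s + a2 * sinh s"
      using fg unfolding f_def by blast
  next
    assume geo: "\<forall>s \<in> I. covD \<gamma> \<gamma>' s = 0"
    have cv: "convex I" using I_interval by (simp add: is_interval_convex)
    have Tg: "T' s = \<gamma> s" if s: "s \<in> I" for s
    proof -
      have "q *\<^sub>R X s = 0" using geo covX[OF s] s by simp
      hence "X s = 0" using q_nz by simp
      thus ?thesis using TX[OF s] by simp
    qed
    define V where "V s = cosh s *\<^sub>R \<gamma> s - sinh s *\<^sub>R \<gamma>' s" for s
    define W where "W s = cosh s *\<^sub>R \<gamma>' s - sinh s *\<^sub>R \<gamma> s" for s
    obtain v where hv: "\<And>s. s \<in> I \<Longrightarrow> V s = v"
    proof (rule has_vector_derivative_zero_constant[OF cv])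
      fix s assume s: "s \<in> I"
      have "(V has_vector_derivative (cosh s *\<^sub>R \<gamma>' s + sinh s *\<^sub>R \<gamma> s) - (sinh s *\<^sub>R T' s + cosh s *\<^sub>R \<gamma>' s)) (at s)"
        unfolding V_def by (intro has_vector_derivative_diff has_vector_derivative_scaleR dcosh dsinh deriv dT s)
      thus "(V has_vector_derivative 0) (at s within I)"
        using Tg[OF s] by (simp add: has_vector_derivative_at_within)
   qed blast
    obtain w where hw: "\<And>s. s \<in> I \<Longrightarrow> W s = w"
    proof (rule has_vector_derivative_zero_constant[OF cv])
      fix s assume s: "s \<in> I"
      have "(W has_vector_derivative (cosh s *\<^sub>R T' s + sinh s *\<^sub>R \<gamma>' s) - (sinh s *\<^sub>R \<gamma>' s + cosh s *\<^sub>R \<gamma> s)) (at s)"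
        unfolding W_def by (intro has_vector_derivative_diff has_vector_derivative_scaleR dcosh dsinh deriv dT s)
      thus "(W has_vector_derivative 0) (at s within I)"
        using Tg[OF s] by (simp add: has_vector_derivative_at_within)
   qed blast
    have form: "\<gamma> s = cosh s *\<^sub>R v + sinh s *\<^sub>R w" and formT: "\<gamma>' s = sinh s *\<^sub>R v + cosh s *\<^sub>R w"
      if s: "s \<in> I" for s
    proof -
      have c: "cosh s * cosh s - sinh s * sinh s = 1" using cosh_square_eq[of s] by (simp add: power2_eq_square)
      have "cosh s *\<^sub>R V s + sinh s *\<^sub>R W s = (cosh s * cosh s - sinh s * sinh s) *\<^sub>R \<gamma> s"
        unfolding V_def W_def by (simp add: algebra_simps)
      thus "\<gamma> s = cosh s *\<^sub>R v + sinh s *\<^sub>R w" using c hv[OF s] hw[OF s] by simp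
      have "sinh s *\<^sub>R V s + cosh s *\<^sub>R W s = (cosh s * cosh s - sinh s * sinh s) *\<^sub>R \<gamma>' s"
        unfolding V_def W_def by (simp add: algebra_simps)
      thus "\<gamma>' s = sinh s *\<^sub>R v + cosh s *\<^sub>R w" using c hv[OF s] hw[OF s] by simp
    qed
    obtain s0 where s0: "s0 \<in> I" using I_ne by blast
    define c where "c = cosh s0"
    define sh where "sh = sinh s0"
    have c1: "c * c - sh * sh = 1" using cosh_square_eq[of s0] unfolding c_def sh_def by (simp add: power2_eq_square)
    have vdef: "v = c *\<^sub>R \<gamma> s0 - sh *\<^sub>R \<gamma>' s0" and wdef: "w = c *\<^sub>R \<gamma>' s0 - sh *\<^sub>R \<gamma> s0"
      using hv[OF s0] hw[OF s0] unfolding V_def W_def c_def sh_def by auto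
    have l1: "lor (\<gamma> s0) (\<gamma> s0) = -1" "lor (\<gamma> s0) (\<gamma>' s0) = 0" "lor (\<gamma>' s0) (\<gamma> s0) = 0"
       "lor (\<gamma>' s0) (\<gamma>' s0) = 1" using pp[OF s0] pT[OF s0] Tp[OF s0] unit_speed[OF s0] by auto
    have vv: "lor v v = -1" unfolding vdef using c1 by (simp add: lor_simps l1 algebra_simps)
    have ww: "lor w w = 1" unfolding wdef using c1 by (simp add: lor_simps l1 algebra_simps)
    have vw: "lor v w = 0" unfolding vdef wdef by (simp add: lor_simps l1 algebra_simps)
    define d where "d = a + f s0 *\<^sub>R \<gamma> s0 - g s0 *\<^sub>R \<gamma>' s0"
    have la: "lor a (\<gamma> s0) = f s0" "lor (\<gamma> s0) a = f s0" "lor a (\<gamma>' s0) = g s0" "lor (\<gamma>' s0) a = g s0"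
      unfolding f_def g_def by (simp_all add: lor_sym)
    have dp: "lor d (\<gamma> s0) = 0" unfolding d_def by (simp add: lor_simps l1 la)
    have "lor d d = lor a a + f s0 ^ 2 - g s0 ^ 2" unfolding d_def
      by (simp add: lor_simps l1 la algebra_simps power2_eq_square)
    also have "\<dots> = lor (X s0) (X s0)" using XX[OF s0] by simp
    also have "\<dots> = 0" using Tg[OF s0] TX[OF s0] q_nz by (simp add: lor_zero1)
    finally have "d = 0" using tangent_nonneg(2)[OF in_H3[OF s0] dp] by simp
    hence aeq: "a = g s0 *\<^sub>R (sh *\<^sub>R v + c *\<^sub>R w) - f s0 *\<^sub>R (c *\<^sub>R v + sh *\<^sub>R w)"
      using form[OF s0] formT[OF s0] unfolding d_def c_def sh_def by (simp add: algebra_simps)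
    have "a \<in> span {v, w}" unfolding aeq
      by (intro span_add span_diff span_scale span_base) auto
    thus "\<exists>v w. lor v v = -1 \<and> lor w w = 1 \<and> lor v w = 0 \<and> a \<in> span {v, w} \<and>
           (\<forall>s \<in> I. \<gamma> s = cosh s *\<^sub>R v + sinh s *\<^sub>R w)"
      using vv ww vw form by blast
  next
    show "let \<kappa> = (\<lambda>s. sqrt (lor (covD \<gamma> \<gamma>' s) (covD \<gamma> \<gamma>' s)));
             N = (\<lambda>s. (1 / \<kappa> s) *\<^sub>R covD \<gamma> \<gamma>' s);
             B = (\<lambda>s. hcross (\<gamma> s) (\<gamma>' s) (N s));
             \<tau> = (\<lambda>s. q * (a1 * sinh s + a2 * cosh s))
         in (\<forall>s \<in> I. \<kappa> s > 0 \<and> (\<kappa> s)\<^sup>2 = q\<^sup>2 * (lor a a + a1\<^sup>2 - a2\<^sup>2))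
          \<and> (\<forall>s \<in> I. N differentiable (at s) \<and>
                covD \<gamma> N s = - \<kappa> s *\<^sub>R \<gamma>' s + \<tau> s *\<^sub>R B s)"
      if ng: "\<not> (\<forall>s \<in> I. covD \<gamma> \<gamma>' s = 0)"
    proof -
    obtain s0 where s0: "s0 \<in> I" using I_ne by blast
    define C where "C = lor a a + a1\<^sup>2 - a2\<^sup>2"
    have C0: "C \<ge> 0" using Xnn[OF s0] XXC[OF s0] unfolding C_def by simp
    have Cn: "C \<noteq> 0"
    proof
      assume "C = 0"
      have "covD \<gamma> \<gamma>' s = 0" if s: "s \<in> I" for s
      proof -
        have "lor (X s) (X s) = 0" using XXC[OF s] \<open>C = 0\<close> unfolding C_def by simp
        hence "X s = 0" using tangent_nonneg(2)[OF in_H3[OF s] Xp] by simp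
        thus ?thesis using covX[OF s] by simp
      qed
      thus False using ng by blast
    qed
    define k where "k = \<bar>q\<bar> * sqrt C"
    have kpos: "k > 0" unfolding k_def using C0 Cn q_nz by simp
    have k2: "k\<^sup>2 = q\<^sup>2 * C" unfolding k_def using C0 by (simp add: power_mult_distrib)
    have kap: "sqrt (lor (covD \<gamma> \<gamma>' s) (covD \<gamma> \<gamma>' s)) = k" if s: "s \<in> I" for s
    proof -
      have "lor (covD \<gamma> \<gamma>' s) (covD \<gamma> \<gamma>' s) = q\<^sup>2 * C"
        unfolding covX[OF s] using XXC[OF s] unfolding C_def by (simp add: lor_simps power2_eq_square)
      thus ?thesis unfolding k_def by (simp add: real_sqrt_mult)
    qed
    have Nrep: "(1 / sqrt (lor (covD \<gamma> \<gamma>' s) (covD \<gamma> \<gamma>' s))) *\<^sub>R covD \<gamma> \<gamma>' s = (q / k) *\<^sub>R X s"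
      if s: "s \<in> I" for s
      by (simp only: kap[OF s]) (simp add: covX[OF s] kpos)
    define Y where "Y s = cr (\<gamma> s) a (X s)" for s
    have dX: "(X has_vector_derivative q *\<^sub>R Y s) (at s)" if s: "s \<in> I" for s
    proof -
      have "(X has_vector_derivative (cr (\<gamma> s) a (T' s) + cr (\<gamma>' s) a (\<gamma>' s))) (at s)"
        unfolding X_def by (rule cr_deriv[OF deriv[OF s] dT[OF s]])
      thus ?thesis unfolding TX[OF s] Y_def by (simp add: cr_same2 cr_add2 cr_scale2)
    qed
    have dN: "((\<lambda>s. (1 / sqrt (lor (covD \<gamma> \<gamma>' s) (covD \<gamma> \<gamma>' s))) *\<^sub>R covD \<gamma> \<gamma>' s)
       has_vector_derivative (q / k * q) *\<^sub>R Y s) (at s)" if s: "s \<in> I" for s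
    proof -
      have "((\<lambda>s. (q / k) *\<^sub>R X s) has_vector_derivative ((q / k) *\<^sub>R (q *\<^sub>R Y s) + 0 *\<^sub>R X s)) (at s)"
        by (intro has_vector_derivative_scaleR dX s DERIV_const)
      hence "((\<lambda>s. (q / k) *\<^sub>R X s) has_vector_derivative (q / k * q) *\<^sub>R Y s) (at s)" by simp
      thus ?thesis
        by (rule has_vector_derivative_transform_within_open[OF _ I_open s]) (simp add: Nrep)
    qed
    show ?thesis unfolding Let_def
    proof (intro conjI ballI)
      fix s assume s: "s \<in> I"
      show "0 < sqrt (lor (covD \<gamma> \<gamma>' s) (covD \<gamma> \<gamma>' s))" using kap[OF s] kpos by simp
      show "(sqrt (lor (covD \<gamma> \<gamma>' s) (covD \<gamma> \<gamma>' s)))\<^sup>2 = q\<^sup>2 * (lor a a + a1\<^sup>2 - a2\<^sup>2)"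
        using kap[OF s] k2 unfolding C_def by simp
    next
      fix s assume s: "s \<in> I"
      show "(\<lambda>s. (1 / sqrt (lor (covD \<gamma> \<gamma>' s) (covD \<gamma> \<gamma>' s))) *\<^sub>R covD \<gamma> \<gamma>' s) differentiable at s"
        using dN[OF s] unfolding differentiable_def has_vector_derivative_def by blast
      have vd: "vector_derivative (\<lambda>s. (1 / sqrt (lor (covD \<gamma> \<gamma>' s) (covD \<gamma> \<gamma>' s))) *\<^sub>R covD \<gamma> \<gamma>' s) (at s)
          = (q / k * q) *\<^sub>R Y s" by (rule vector_derivative_at[OF dN[OF s]])
      have Yp: "lor (Y s) (\<gamma> s) = 0" unfolding Y_def by (rule cr_lor_p)
      have l1: "lor (\<gamma> s) (\<gamma> s) = -1" "lor (\<gamma> s) (\<gamma>' s) = 0" "lor (\<gamma>' s) (\<gamma> s) = 0"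
        "lor (\<gamma>' s) (\<gamma>' s) = 1" using pp[OF s] pT[OF s] Tp[OF s] unit_speed[OF s] by auto
      have la: "lor a (\<gamma> s) = f s" "lor (\<gamma> s) a = f s" "lor a (\<gamma>' s) = g s" "lor (\<gamma>' s) a = g s"
        unfolding f_def g_def by (simp_all add: lor_sym)
      have Yf: "Y s = g s *\<^sub>R a + (- (lor a a + f s * f s)) *\<^sub>R \<gamma>' s + (g s * f s) *\<^sub>R \<gamma> s"
        unfolding Y_def X_def cr_bac by (simp add: l1 la)
      have Bf: "cr (\<gamma> s) (\<gamma>' s) (X s) = a + (- g s) *\<^sub>R \<gamma>' s + f s *\<^sub>R \<gamma> s"
        unfolding X_def cr_bac by (simp add: l1 la)
      have Bs: "hcross (\<gamma> s) (\<gamma>' s) ((1 / sqrt (lor (covD \<gamma> \<gamma>' s) (covD \<gamma> \<gamma>' s))) *\<^sub>R covD \<gamma> \<gamma>' s)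
          = (q / k) *\<^sub>R (a + (- g s) *\<^sub>R \<gamma>' s + f s *\<^sub>R \<gamma> s)"
        unfolding hcross_eq[OF in_H3[OF s]] Nrep[OF s] cr_scale2 Bf ..
      have fg2: "f s * f s - g s * g s = a1\<^sup>2 - a2\<^sup>2" using XX[OF s] XXC[OF s] by (simp add: power2_eq_square)
      have kk: "k * k = q * q * (lor a a + (f s * f s - g s * g s))"
        using k2 unfolding C_def fg2 by (simp add: power2_eq_square)
      have e0: "q * q * (lor a a + f s * f s) = k * k + q * q * (g s * g s)"
        unfolding kk by (simp add: algebra_simps)
      have e: "q / k * q * (lor a a + f s * f s) = k + q * g s * (q / k) * g s"
        using e0 kpos by (simp add: field_simps)
      have "covD \<gamma> (\<lambda>s. (1 / sqrt (lor (covD \<gamma> \<gamma>' s) (covD \<gamma> \<gamma>' s))) *\<^sub>R covD \<gamma> \<gamma>' s) s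
          = vector_derivative (\<lambda>s. (1 / sqrt (lor (covD \<gamma> \<gamma>' s) (covD \<gamma> \<gamma>' s))) *\<^sub>R covD \<gamma> \<gamma>' s) (at s)
          + lor (vector_derivative (\<lambda>s. (1 / sqrt (lor (covD \<gamma> \<gamma>' s) (covD \<gamma> \<gamma>' s))) *\<^sub>R covD \<gamma> \<gamma>' s) (at s)) (\<gamma> s) *\<^sub>R \<gamma> s"
        by (rule covD_def)
      also have "\<dots> = (q / k * q) *\<^sub>R Y s"
        unfolding vd by (simp add: lor_simps Yp)
      also have "\<dots> = (q / k * q * g s) *\<^sub>R a + (- (q / k * q * (lor a a + f s * f s))) *\<^sub>R \<gamma>' s
           + (q / k * q * g s * f s) *\<^sub>R \<gamma> s"
        unfolding Yf by (simp add: algebra_simps)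
      also have "\<dots> = (q / k * q * g s) *\<^sub>R a + (- k - q * g s * (q / k) * g s) *\<^sub>R \<gamma>' s
           + (q / k * q * g s * f s) *\<^sub>R \<gamma> s"
        unfolding e by simp
      also have "\<dots> = - sqrt (lor (covD \<gamma> \<gamma>' s) (covD \<gamma> \<gamma>' s)) *\<^sub>R \<gamma>' s +
         (q * (a1 * sinh s + a2 * cosh s)) *\<^sub>R
         hcross (\<gamma> s) (\<gamma>' s) ((1 / sqrt (lor (covD \<gamma> \<gamma>' s) (covD \<gamma> \<gamma>' s))) *\<^sub>R covD \<gamma> \<gamma>' s)"
      proof -
        have gs: "a1 * sinh s + a2 * cosh s = g s" using fg[OF s] by simp
        show ?thesis unfolding Bs unfolding kap[OF s] gs by (simp add: algebra_simps)
      qed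
      finally show "covD \<gamma> (\<lambda>s. (1 / sqrt (lor (covD \<gamma> \<gamma>' s) (covD \<gamma> \<gamma>' s))) *\<^sub>R covD \<gamma> \<gamma>' s) s =
         - sqrt (lor (covD \<gamma> \<gamma>' s) (covD \<gamma> \<gamma>' s)) *\<^sub>R \<gamma>' s +
         (q * (a1 * sinh s + a2 * cosh s)) *\<^sub>R
         hcross (\<gamma> s) (\<gamma>' s) ((1 / sqrt (lor (covD \<gamma> \<gamma>' s) (covD \<gamma> \<gamma>' s))) *\<^sub>R covD \<gamma> \<gamma>' s)" .
    qed
    qed
  qed
qed

end
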